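(* For every $\alpha$ with $5\pi/6<\alpha<2\pi$ there exist $R>0$ and a finite set $V$ of pairwise distinct points in the plane such that, when the radius levels $r_1<\dots<r_k=R$ include every pairwise distance $d(u,v)\le R$ between nodes of $V$, the graph $G_R$ is connected but $G_\alpha$ is not connected. In particular, for $\alpha>5\pi/6$, $G_\alpha$ does not in general preserve the connectivity of $G_R$.
   Context: Let $V$ be a finite set of pairwise distinct points (nodes) in the Euclidean plane, $d$ the Euclidean distance, and $R>0$. Let $G_R=(V,E)$ be the undirected graph with $E=\{\{u,v\}: u\neq v,\ d(u,v)\le R\}$. Fix a finite increasing sequence of radius levels $0<r_1<r_2<\dots<r_k=R$. For $u\in V$ and $1\le i\le k$ let $S_i(u)=\{v\in V\setminus\{u\}: d(u,v)\le r_i\}$. For $0<\alpha<2\pi$, a closed cone of width $\alpha$ with apex $u$ is a set $\{u+t(\cos\varphi,\sin\varphi): t\ge 0,\ \varphi\in[\theta-\alpha/2,\theta+\alpha/2]\}$ for some $\theta$. A finite set $S\subseteq V\setminus\{u\}$ has an $\alpha$-gap (at $u$) if some closed cone of width $\alpha$ with apex $u$ contains no node of $S$ (in particular $\emptyset$ has an $\alpha$-gap). The algorithm CBTC($\alpha$) assigns to each $u$ the index $i_u$ = the least $i\in\{1,\dots,k\}$ such that $S_i(u)$ has no $\alpha$-gap, or $i_u=k$ if there is no such $i$; set $N_\alpha(u)=S_{i_u}(u)$ and $N_\alpha=\{(u,v): v\in N_\alpha(u)\}$. Let $E_\alpha=\{\{u,v\}: (u,v)\in N_\alpha \text{ or }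 (v,u)\in N_\alpha\}$ (the symmetric closure of $N_\alpha$) and $G_\alpha=(V,E_\alpha)$. *)

theory Defs
  imports "HOL-Analysis.Analysis"
begin

text \<open>The Euclidean plane is modelled by the complex numbers; dist is Euclidean distance.
  Radius levels r_1 < ... < r_k are a list rs (0-based indices 0..k-1).\<close>

definition levels_ok :: "real list \<Rightarrow> real \<Rightarrow> bool" where
  "levels_ok rs R \<longleftrightarrow> rs \<noteq> [] \<and> sorted_wrt (<) rs \<and> 0 < hd rs \<and> last rs = R"

definition Sset :: "complex set \<Rightarrow> real list \<Rightarrow> nat \<Rightarrow> complex \<Rightarrow> complex set" where
  "Sset V rs i u = {v \<in> V. v \<noteq> u \<and> dist u v \<le> rs ! i}"

definition cone :: "complex \<Rightarrow> real \<Rightarrow> real \<Rightarrow> complex set" where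
  "cone u \<alpha> \<theta> = {u + complex_of_real t * cis \<phi> | t \<phi>.
      0 \<le> t \<and> \<theta> - \<alpha>/2 \<le> \<phi> \<and> \<phi> \<le> \<theta> + \<alpha>/2}"

definition has_gap :: "complex \<Rightarrow> real \<Rightarrow> complex set \<Rightarrow> bool" where
  "has_gap u \<alpha> S \<longleftrightarrow> (\<exists>\<theta>. cone u \<alpha> \<theta> \<inter> S = {})"

definition cbtc_index :: "complex set \<Rightarrow> real list \<Rightarrow> real \<Rightarrow> complex \<Rightarrow> nat" where
  "cbtc_index V rs \<alpha> u =
     (if \<exists>i < length rs. \<not> has_gap u \<alpha> (Sset V rs i u)
      then (LEAST i. i < length rs \<and> \<not> has_gap u \<alpha> (Sset V rs i u))
      else length rs - 1)"

definition N_alpha :: "complex set \<Rightarrow> real list \<Rightarrow> real \<Rightarrow> complex \<Rightarrow> complex set" where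
  "N_alpha V rs \<alpha> u = Sset V rs (cbtc_index V rs \<alpha> u) u"

definition E_R :: "complex set \<Rightarrow> real \<Rightarrow> (complex \<times> complex) set" where
  "E_R V R = {(u, v). u \<in> V \<and> v \<in> V \<and> u \<noteq> v \<and> dist u v \<le> R}"

definition E_alpha :: "complex set \<Rightarrow> real list \<Rightarrow> real \<Rightarrow> (complex \<times> complex) set" where
  "E_alpha V rs \<alpha> = {(u, v). u \<in> V \<and> v \<in> V \<and>
      (v \<in> N_alpha V rs \<alpha> u \<or> u \<in> N_alpha V rs \<alpha> v)}"

definition graph_connected :: "'a set \<Rightarrow> ('a \<times> 'a) set \<Rightarrow> bool" where
  "graph_connected V E \<longleftrightarrow> (\<forall>u\<in>V. \<forall>v\<in>V. (u, v) \<in> E\<^sup>*)"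

end

theory Submission
  imports Defs
begin


lemma cis_shift: "cis (x + 2 * pi * of_int k) = cis x"
proof -
  have "cis (x + 2 * pi * of_int k) = cis x * cis (2 * pi * of_int k)"
    by (rule cis_mult[symmetric])
  also have "cis (2 * pi * of_int k) = 1" by (rule cis_multiple_2pi) simp
  finally show ?thesis by (simp only: mult_1_right)
qed

lemma in_cone:
  assumes "c \<ge> 0" "\<theta> - \<alpha>/2 \<le> \<phi> + 2 * pi * of_int k" "\<phi> + 2 * pi * of_int k \<le> \<theta> + \<alpha>/2"
  shows "u + complex_of_real c * cis \<phi> \<in> cone u \<alpha> \<theta>"
  unfolding cone_def
  apply (rule CollectI)
  apply (rule exI[of _ c], rule exI[of _ "\<phi> + 2 * pi * of_int k"])
  using assms by (simp add: cis_shift)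

lemma no_gap3:
  assumes o1: "pA \<le> pB" and o2: "pB \<le> pC" and o3: "pC \<le> pA + 2*pi"
    and g1: "pB - pA \<le> \<alpha>" and g2: "pC - pB \<le> \<alpha>" and g3: "pA + 2*pi - pC \<le> \<alpha>"
    and cnn: "kA \<ge> 0" "kB \<ge> 0" "kC \<ge> 0"
    and mem: "u + complex_of_real kA * cis pA \<in> S" "u + complex_of_real kB * cis pB \<in> S"
           "u + complex_of_real kC * cis pC \<in> S"
  shows "\<not> has_gap u \<alpha> S"
  unfolding has_gap_def
proof
  assume "\<exists>\<theta>. cone u \<alpha> \<theta> \<inter> S = {}"
  then obtain \<theta> where th: "cone u \<alpha> \<theta> \<inter> S = {}" by blast
  define m where "m = \<theta> - \<alpha>/2"
  define k where "k = floor ((m - (pC - 2*pi)) / (2*pi))"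
  define m' where "m' = m - 2*pi * of_int k"
  have "of_int k \<le> (m - (pC - 2*pi)) / (2*pi)" "(m - (pC - 2*pi)) / (2*pi) < of_int k + 1"
    unfolding k_def by linarith+
  hence "2*pi * of_int k \<le> m - (pC - 2*pi)" "m - (pC - 2*pi) < 2*pi*(of_int k + 1)"
    using pi_gt_zero by (simp_all add: field_simps)
  hence lo: "pC - 2*pi \<le> m'" and hi: "m' < pC" unfolding m'_def by (simp_all add: algebra_simps)
  have "\<exists>c \<phi>. c \<ge> 0 \<and> u + complex_of_real c * cis \<phi> \<in> S \<and> m' \<le> \<phi> \<and> \<phi> \<le> m' + \<alpha>"
  proof (cases "m' \<le> pA")
    case True thus ?thesis using cnn mem lo g3 by (intro exI[of _ kA] exI[of _ pA]) auto
  next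
    case f1: False
    show ?thesis
    proof (cases "m' \<le> pB")
      case True thus ?thesis using cnn mem f1 g1 by (intro exI[of _ kB] exI[of _ pB]) auto
    next
      case False thus ?thesis using cnn mem hi g2 by (intro exI[of _ kC] exI[of _ pC]) auto
    qed
  qed
  then obtain cc \<phi> where cc: "cc \<ge> 0" "u + complex_of_real cc * cis \<phi> \<in> S" "m' \<le> \<phi>" "\<phi> \<le> m' + \<alpha>"
    by blast
  have "u + complex_of_real cc * cis \<phi> \<in> cone u \<alpha> \<theta>"
    by (rule in_cone[where k=k]) (use cc in \<open>auto simp: m'_def m_def\<close>)
  thus False using th cc by blast
qed

lemma gap_mono: "has_gap u \<alpha> S' \<Longrightarrow> S \<subseteq> S' \<Longrightarrow> has_gap u \<alpha> S"
  unfolding has_gap_def by blast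

lemma levels_mono: assumes "levels_ok rs R" "i \<le> j" "j < length rs" shows "rs ! i \<le> rs ! j"
proof (cases "i = j")
  case False
  hence "i < j" using assms(2) by simp
  moreover have "sorted_wrt (<) rs" using assms(1) unfolding levels_ok_def by blast
  ultimately have "rs ! i < rs ! j" using assms(3) by (simp add: sorted_wrt_iff_nth_less)
  thus ?thesis by simp
qed simp

lemma idx_lt: assumes "levels_ok rs R" shows "cbtc_index V rs \<alpha> u < length rs"
proof -
  have ne: "rs \<noteq> []" using assms levels_ok_def by blast
  define P where "P = (\<lambda>i. i < length rs \<and> \<not> has_gap u \<alpha> (Sset V rs i u))"
  have ci: "cbtc_index V rs \<alpha> u = (if \<exists>i. P i then Least P else length rs - 1)"
    unfolding cbtc_index_def P_def by simp
  show ?thesis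
  proof (cases "\<exists>i. P i")
    case True
    then obtain i where "P i" by blast
    hence "P (Least P)" by (rule LeastI)
    thus ?thesis using True ci unfolding P_def by simp
  next
    case False
    thus ?thesis using ne ci by simp
  qed
qed

lemma last_R: assumes "levels_ok rs R" "i < length rs" shows "rs ! i \<le> R"
proof -
  have "rs \<noteq> []" "last rs = R" using assms levels_ok_def by blast+
  hence "R = rs ! (length rs - 1)" by (simp add: last_conv_nth)
  thus ?thesis using levels_mono[OF assms(1), of i "length rs - 1"] assms by simp
qed

lemma N_le_R: assumes "levels_ok rs R" "v \<in> N_alpha V rs \<alpha> u"
  shows "v \<in> V" "v \<noteq> u" "dist u v \<le> R"
proof -
  have m: "v \<in> V" "v \<noteq> u" "dist u v \<le> rs ! cbtc_index V rs \<alpha> u"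
    using assms(2) unfolding N_alpha_def Sset_def by auto
  have "rs ! cbtc_index V rs \<alpha> u \<le> R" by (rule last_R[OF assms(1) idx_lt[OF assms(1)]])
  thus "v \<in> V" "v \<noteq> u" "dist u v \<le> R" using m by auto
qed

lemma N_small: assumes "levels_ok rs R" "j < length rs" "\<not> has_gap u \<alpha> (Sset V rs j u)"
   "v \<in> N_alpha V rs \<alpha> u" shows "dist u v \<le> rs ! j"
proof -
  have ex: "\<exists>i < length rs. \<not> has_gap u \<alpha> (Sset V rs i u)" using assms by blast
  have le: "cbtc_index V rs \<alpha> u \<le> j" unfolding cbtc_index_def using ex assms(2,3)
    by (simp add: Least_le)
  have "dist u v \<le> rs ! cbtc_index V rs \<alpha> u" using assms(4) unfolding N_alpha_def Sset_def by auto
  also have "\<dots> \<le> rs ! j" using levels_mono[OF assms(1) le assms(2)] .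
  finally show ?thesis .
qed



lemma dist_C: "dist (Complex a b) (Complex c d) = sqrt ((a-c)^2 + (b-d)^2)"
proof -
  have "Complex a b - Complex c d = Complex (a-c) (b-d)" by (simp add: complex_eq_iff)
  thus ?thesis by (simp add: dist_norm complex_norm)
qed

lemma re_big: "(X::real) < -1 \<Longrightarrow> 1 < X^2 + Y^2"
proof -
  assume a: "X < -1"
  have "1 * 1 < (-X) * (-X)" using a by (intro mult_strict_mono) auto
  hence "1 < X^2" by (simp add: power2_eq_square)
  moreover have "0 \<le> Y^2" by simp
  ultimately show ?thesis by linarith
qed

lemma dist_gt1: "1 < (a-c)^2 + (b-d)^2 \<Longrightarrow> 1 < dist (Complex a b) (Complex c d)"
  by (simp add: dist_C)

lemma dist_gt1': "a - c < -1 \<Longrightarrow> 1 < dist (Complex a b) (Complex c d)"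
  by (rule dist_gt1, rule re_big)

lemma dist_eq: "(a-c)^2 + (b-d)^2 = x^2 \<Longrightarrow> 0 \<le> x \<Longrightarrow> dist (Complex a b) (Complex c d) = x"
  by (simp add: dist_C)

lemma construction:
  fixes e \<alpha> :: real
  assumes e0: "0 < e" and e1: "e \<le> pi/12" and al: "5 * pi/6 + 2 * e \<le> \<alpha>"
  defines "a \<equiv> pi/3 + e"
  defines "ca \<equiv> cos a" and "sa \<equiv> sin a" and "ce \<equiv> cos e" and "se \<equiv> sin e"
  defines "t \<equiv> (1 + 2 * ca)/2"
  defines "r \<equiv> t * (t-2 * ca)/2"
  defines "c0 \<equiv> Complex 0 0" and "c1 \<equiv> Complex 1 0"
  defines "A1 \<equiv> Complex (t * ca) (t * sa)" and "A2 \<equiv> Complex (-1/2) 0" and "A3 \<equiv> Complex (-r * se) (-r * ce)"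
  defines "B1 \<equiv> Complex (1-t * ca) (-t * sa)" and "B2 \<equiv> Complex (3/2) 0" and "B3 \<equiv> Complex (1+r * se) (r * ce)"
  defines "V \<equiv> {c0, c1, A1, A2, A3, B1, B2, B3}"
  shows "finite V \<and>
           (\<forall>rs. levels_ok rs 1 \<and>
                 (\<forall>u\<in>V. \<forall>v\<in>V. u \<noteq> v \<and> dist u v \<le> 1 \<longrightarrow> dist u v \<in> set rs)
             \<longrightarrow> graph_connected V (E_R V 1) \<and>
                 \<not> graph_connected V (E_alpha V rs \<alpha>))"
proof -
  have pi0: "0 < pi" by (rule pi_gt_zero)
  have ca_lt: "ca < 1/2" unfolding ca_def a_def
    using cos_monotone_0_pi[of "pi/3" "pi/3+e"] e0 e1 pi0 by (simp add: cos_60)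
  have ca_pos: "0 < ca" unfolding ca_def a_def by (intro cos_gt_zero_pi; use e0 e1 pi0 in linarith)
  have sa_pos: "0 < sa" unfolding sa_def a_def by (intro sin_gt_zero; use e0 e1 pi0 in linarith)
  have se_pos: "0 < se" unfolding se_def by (intro sin_gt_zero; use e0 e1 pi0 in linarith)
  have ce_pos: "0 < ce" unfolding ce_def by (intro cos_gt_zero_pi; use e0 e1 pi0 in linarith)
  have pa: "ca^2 + sa^2 = 1" unfolding ca_def sa_def by simp
  have pe: "se^2 + ce^2 = 1" unfolding ce_def se_def by simp
  have w1: "ca * se + sa * ce \<le> 1"
  proof -
    have "ca * se + sa * ce = sin (a + e)" unfolding ca_def sa_def se_def ce_def by (simp add: sin_add)
    thus ?thesis by simp
  qed
  have t1: "2 * ca < t" "t < 1" "1/2 < t" using ca_lt ca_pos unfolding t_def by auto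
  have r2: "2 * r = t * (t-2 * ca)" unfolding r_def by simp
  have r0: "0 < r" unfolding r_def using t1 by simp
  have r1: "r < 1/2"
  proof -
    have "t * (t-2 * ca) < 1 * 1" using t1 ca_pos by (intro mult_strict_mono) auto
    thus ?thesis using r2 by simp
  qed
  have tca: "0 < t * ca" "t * ca < 1/2"
  proof -
    show "0 < t * ca" using t1 ca_pos by simp
    have "t * ca < 1 * (1/2)" using t1 ca_pos ca_lt by (intro mult_strict_mono) auto
    thus "t * ca < 1/2" by simp
  qed
  have tsa: "0 < t * sa" using t1 sa_pos by simp
  have rse: "0 < r * se" using r0 se_pos by simp
  have rce: "0 < r * ce" using r0 ce_pos by simp
  have tnorm: "(t * ca)^2 + (t * sa)^2 = t^2" using pa by algebra
  have rnorm: "(r * se)^2 + (r * ce)^2 = r^2" using pe by algebra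
  
  have d0A1: "dist c0 A1 = t" unfolding c0_def A1_def by (rule dist_eq) (use tnorm t1 in auto)
  have d0A2: "dist c0 A2 = 1/2" unfolding c0_def A2_def by (rule dist_eq) auto
  have d0A3: "dist c0 A3 = r" unfolding c0_def A3_def by (rule dist_eq) (use rnorm r0 in auto)
  have d1B1: "dist c1 B1 = t" unfolding c1_def B1_def by (rule dist_eq) (use tnorm t1 in auto)
  have d1B2: "dist c1 B2 = 1/2" unfolding c1_def B2_def by (rule dist_eq) auto
  have d1B3: "dist c1 B3 = r" unfolding c1_def B3_def by (rule dist_eq) (use rnorm r0 in auto)
  have d01: "dist c0 c1 = 1" unfolding c0_def c1_def by (rule dist_eq) auto
  
  have sp1: "1 < (0 - (1 - t * ca))^2 + (0 - (-t * sa))^2"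
  proof -
    have "(0 - (1 - t * ca))^2 + (0 - (-t * sa))^2 = 1 + t * (t-2 * ca)" using pa by algebra
    thus ?thesis using t1 by simp
  qed
  have sp2: "1 < (t * ca - (1 - t * ca))^2 + (t * sa - (-t * sa))^2"
  proof -
    have "(t * ca - (1 - t * ca))^2 + (t * sa - (-t * sa))^2 = 1 + 4 * t * (t-ca)" using pa by algebra
    thus ?thesis using t1 ca_pos by simp
  qed
  have sp3: "1 < (t * ca - (1 + r * se))^2 + (t * sa - r * ce)^2"
  proof -
    have "(t * ca - (1 + r * se))^2 + (t * sa - r * ce)^2 = 1 + 2 * r + r^2 - 2 * r * (t * (ca * se+sa * ce) - se)"
      using pa pe r2 by algebra
    moreover have tw: "t * (ca * se+sa * ce) \<le> t" using w1 t1 by (simp add: mult_left_le)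
    moreover have "2 * r * (t * (ca * se+sa * ce) - se) < 2 * r * 1"
      by (intro mult_strict_left_mono; use r0 t1 se_pos tw in linarith)
    ultimately show ?thesis using r0 zero_le_power2[of r] by linarith
  qed
  have sp4: "1 < (-r * se - (1 - t * ca))^2 + (-r * ce - (-t * sa))^2"
  proof -
    have "(-r * se - (1 - t * ca))^2 + (-r * ce - (-t * sa))^2 = (t * ca - (1 + r * se))^2 + (t * sa - r * ce)^2"
      by algebra
    thus ?thesis using sp3 by simp
  qed
  have sp5: "1 < (t * ca - 1)^2 + (t * sa - 0)^2"
  proof -
    have "(t * ca - 1)^2 + (t * sa - 0)^2 = 1 + t * (t-2 * ca)" using pa by algebra
    thus ?thesis using t1 by simp
  qed
  have cA: "1 < dist c0 B1" "1 < dist c0 B2" "1 < dist c0 B3"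
     "1 < dist A1 c1" "1 < dist A1 B1" "1 < dist A1 B2" "1 < dist A1 B3"
     "1 < dist A2 c1" "1 < dist A2 B1" "1 < dist A2 B2" "1 < dist A2 B3"
     "1 < dist A3 c1" "1 < dist A3 B1" "1 < dist A3 B2" "1 < dist A3 B3"
    unfolding c0_def c1_def A1_def A2_def A3_def B1_def B2_def B3_def
    by (rule dist_gt1, rule sp1 sp2 sp3 sp4 sp5
        | rule dist_gt1', use tca rse in linarith)+
  have cross: "1 < dist x y" if "x \<in> {c0, A1, A2, A3}" "y \<in> {c1, B1, B2, B3}" "\<not> (x = c0 \<and> y = c1)" for x y
    using that cA by auto
  have eA1: "c0 + complex_of_real t * cis a = A1"
    by (simp add: c0_def A1_def ca_def sa_def cis.ctr complex_eq_iff)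
  have eA2: "c0 + complex_of_real (1/2) * cis pi = A2"
    by (simp add: c0_def A2_def cis.ctr complex_eq_iff)
  have eA3: "c0 + complex_of_real r * cis (-pi/2 - e) = A3"
    by (simp add: c0_def A3_def se_def ce_def cis.ctr complex_eq_iff cos_diff sin_diff)
  have eB1: "c1 + complex_of_real t * cis (a + pi) = B1"
    by (simp add: c1_def B1_def ca_def sa_def cis.ctr complex_eq_iff)
  have eB2: "c1 + complex_of_real (1/2) * cis 0 = B2"
    by (simp add: c1_def B2_def cis.ctr complex_eq_iff)
  have eB3: "c1 + complex_of_real r * cis (pi/2 - e) = B3"
    by (simp add: c1_def B3_def se_def ce_def cis.ctr complex_eq_iff cos_diff sin_diff)
  have inV: "c0 \<in> V" "c1 \<in> V" "A1 \<in> V" "A2 \<in> V" "A3 \<in> V" "B1 \<in> V" "B2 \<in> V" "B3 \<in> V"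
    unfolding V_def by simp_all
  have finV: "finite V" unfolding V_def by simp
  show ?thesis
  proof (intro conjI allI impI finV)
    fix rs assume H: "levels_ok rs 1 \<and>
                 (\<forall>u\<in>V. \<forall>v\<in>V. u \<noteq> v \<and> dist u v \<le> 1 \<longrightarrow> dist u v \<in> set rs)"
    hence lv: "levels_ok rs 1" and dall: "\<And>u v. u\<in>V \<Longrightarrow> v\<in>V \<Longrightarrow> u \<noteq> v \<Longrightarrow> dist u v \<le> 1 \<Longrightarrow> dist u v \<in> set rs"
      by auto
    let ?E = "E_R V 1"
    have edge: "(u,v) \<in> ?E \<and> (v,u) \<in> ?E" if "u \<in> V" "v \<in> V" "0 < dist u v" "dist u v \<le> 1" for u v
      using that by (auto simp: E_R_def dist_commute)
    have e: "(c0,A1) \<in> ?E \<and> (A1,c0) \<in> ?E" "(c0,A2) \<in> ?E \<and> (A2,c0) \<in> ?E" "(c0,A3) \<in> ?E \<and> (A3,c0) \<in> ?E"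
      "(c0,c1) \<in> ?E \<and> (c1,c0) \<in> ?E"
      "(c1,B1) \<in> ?E \<and> (B1,c1) \<in> ?E" "(c1,B2) \<in> ?E \<and> (B2,c1) \<in> ?E" "(c1,B3) \<in> ?E \<and> (B3,c1) \<in> ?E"
      by (rule edge; (rule inV | simp add: d0A1 d0A2 d0A3 d1B1 d1B2 d1B3 d01; use t1 r0 r1 in linarith)?)+
    have reach: "(c0,x) \<in> ?E\<^sup>* \<and> (x,c0) \<in> ?E\<^sup>*" if "x \<in> V" for x
    proof -
      have "x = c0 \<or> x = c1 \<or> x = A1 \<or> x = A2 \<or> x = A3 \<or> x = B1 \<or> x = B2 \<or> x = B3"
        using that unfolding V_def by blast
      thus ?thesis using e by (meson r_into_rtrancl rtrancl_trans rtrancl.rtrancl_refl)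
    qed
    show "graph_connected V ?E" unfolding graph_connected_def
      using reach by (meson rtrancl_trans)
    have A1n: "A1 \<noteq> c0" using d0A1 t1 by auto
    have B1n: "c1 \<noteq> B1" using d1B1 t1 by auto
    obtain j0 where j0: "j0 < length rs" "rs ! j0 = t"
      using dall[OF inV(1) inV(3) A1n[symmetric]] d0A1 t1 by (auto simp: in_set_conv_nth)
    obtain j1 where j1: "j1 < length rs" "rs ! j1 = t"
      using dall[OF inV(2) inV(6) B1n] d1B1 t1 by (auto simp: in_set_conv_nth)
    have A2n: "A2 \<noteq> c0" "A3 \<noteq> c0" using d0A2 d0A3 r0 by auto
    have B2n: "B2 \<noteq> c1" "B3 \<noteq> c1" "B1 \<noteq> c1" using d1B2 d1B3 d1B1 r0 t1 by auto
    have ng0: "\<not> has_gap c0 \<alpha> (Sset V rs j0 c0)"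
    proof (rule no_gap3[where pA="-pi/2 - e" and pB=a and pC=pi and kA=r and kB=t and kC="1/2"])
      show "c0 + complex_of_real r * cis (-pi/2 - e) \<in> Sset V rs j0 c0"
        unfolding eA3 Sset_def using inV d0A3 j0 r1 t1 A2n by auto
      show "c0 + complex_of_real t * cis a \<in> Sset V rs j0 c0"
        unfolding eA1 Sset_def using inV d0A1 j0 A1n by auto
      show "c0 + complex_of_real (1/2) * cis pi \<in> Sset V rs j0 c0"
        unfolding eA2 Sset_def using inV d0A2 j0 t1 A2n by auto
    qed (use e0 e1 al pi0 r0 t1 in \<open>simp_all add: a_def\<close>)
    have ng1: "\<not> has_gap c1 \<alpha> (Sset V rs j1 c1)"
    proof (rule no_gap3[where pA=0 and pB="pi/2 - e" and pC="a + pi" and kA="1/2" and kB=r and kC=t])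
      show "c1 + complex_of_real r * cis (pi/2 - e) \<in> Sset V rs j1 c1"
        unfolding eB3 Sset_def using inV d1B3 j1 r1 t1 B2n by auto
      show "c1 + complex_of_real t * cis (a + pi) \<in> Sset V rs j1 c1"
        unfolding eB1 Sset_def using inV d1B1 j1 B2n by auto
      show "c1 + complex_of_real (1/2) * cis 0 \<in> Sset V rs j1 c1"
        unfolding eB2 Sset_def using inV d1B2 j1 t1 B2n by auto
    qed (use e0 e1 al pi0 r0 t1 in \<open>simp_all add: a_def\<close>)
    have n0: "c1 \<notin> N_alpha V rs \<alpha> c0"
      using N_small[OF lv j0(1) ng0, of c1] j0 d01 t1 by auto
    have n1: "c0 \<notin> N_alpha V rs \<alpha> c1"
      using N_small[OF lv j1(1) ng1, of c0] j1 d01 t1 by (auto simp: dist_commute)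
    let ?A = "{c0, A1, A2, A3}"
    have clos: "y \<in> ?A" if "x \<in> ?A" "(x,y) \<in> E_alpha V rs \<alpha>" for x y
    proof (rule ccontr)
      assume ny: "y \<notin> ?A"
      have yV: "y \<in> V" and yN: "y \<in> N_alpha V rs \<alpha> x \<or> x \<in> N_alpha V rs \<alpha> y"
        using that(2) unfolding E_alpha_def by auto
      have dxy: "dist x y \<le> 1" using yN N_le_R(3)[OF lv] by (metis dist_commute)
      have yB: "y \<in> {c1, B1, B2, B3}" using yV ny unfolding V_def by blast
      show False
      proof (cases "x = c0 \<and> y = c1")
        case True thus ?thesis using yN n0 n1 by auto
      next
        case False thus ?thesis using cross[OF that(1) yB False] dxy by linarith
      qed
    qed
    have "(c0, v) \<in> (E_alpha V rs \<alpha>)\<^sup>* \<Longrightarrow> v \<in> ?A" for v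
    proof (induction rule: rtrancl_induct)
      case base thus ?case by simp
    next
      case (step y z) thus ?case using clos by blast
    qed
    moreover have "c1 \<notin> ?A" using tsa rce
      unfolding c0_def c1_def A1_def A2_def A3_def by auto
    ultimately show "\<not> graph_connected V (E_alpha V rs \<alpha>)"
      unfolding graph_connected_def using inV by blast
  qed
qed


theorem theorem2:
  fixes \<alpha> :: real
  assumes "5 * pi / 6 < \<alpha>" and "\<alpha> < 2 * pi"
  shows "\<exists>R > 0. \<exists>V :: complex set. finite V \<and>
           (\<forall>rs. levels_ok rs R \<and>
                 (\<forall>u\<in>V. \<forall>v\<in>V. u \<noteq> v \<and> dist u v \<le> R \<longrightarrow> dist u v \<in> set rs)
             \<longrightarrow> graph_connected V (E_R V R) \<and>
                 \<not> graph_connected V (E_alpha V rs \<alpha>))"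
proof -
  define e where "e = min (pi/12) ((\<alpha> - 5 * pi / 6) / 2)"
  have m1: "e \<le> pi/12" "e \<le> (\<alpha> - 5 * pi / 6) / 2" unfolding e_def
    by (rule min.cobounded1, rule min.cobounded2)
  have m2: "e = pi/12 \<or> e = (\<alpha> - 5 * pi / 6) / 2" unfolding e_def by linarith
  have "0 < e" using m2 assms pi_gt_zero by (elim disjE) (simp_all add: field_simps)
  moreover have "5*pi/6 + 2 * e \<le> \<alpha>" using m1(2) by (simp add: field_simps)
  ultimately have "0 < e" "e \<le> pi/12" "5*pi/6 + 2 * e \<le> \<alpha>" using m1 by auto
  note C = construction[OF this]
  show ?thesis
    apply (rule exI[of _ "1::real"])
    apply (rule conjI)
     apply simp
    apply (rule exI)
    apply (rule C)
    done
qed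

end
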